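(* For every $m\ge3$ there exists $r_0(m)$ such that for all $r\ge r_0(m)$ there is no $r$-perfect code in $(\mathbb Z^m,d_a)$.
   Context: $d_a(\mathbf x,\mathbf y)=\max\{\sum_{i:x_i>y_i}(x_i-y_i),\sum_{i:x_i<y_i}(y_i-x_i)\}$ on $\mathbb Z^m$. A code $\mathcal C\subseteq\mathbb Z^m$ is $r$-perfect if the balls $\{\mathbf y: d_a(\mathbf y,\mathbf x)\le r\}$, $\mathbf x\in\mathcal C$, are pairwise disjoint and their union is $\mathbb Z^m$. *)

theory Defs
  imports Main
begin

(* Z^m is represented as integer functions on nat that vanish outside {..<m}. *)
definition Zm :: "nat \<Rightarrow> (nat \<Rightarrow> int) set" where
  "Zm m = {x. \<forall>i\<ge>m. x i = 0}"

definition d_a :: "nat \<Rightarrow> (nat \<Rightarrow> int) \<Rightarrow> (nat \<Rightarrow> int) \<Rightarrow> int" where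
  "d_a m x y = max (\<Sum>i\<in>{i. i < m \<and> x i > y i}. x i - y i)
                   (\<Sum>i\<in>{i. i < m \<and> x i < y i}. y i - x i)"

definition ball_a :: "nat \<Rightarrow> nat \<Rightarrow> (nat \<Rightarrow> int) \<Rightarrow> (nat \<Rightarrow> int) set" where
  "ball_a m r x = {y \<in> Zm m. d_a m y x \<le> int r}"

definition perfect_code :: "nat \<Rightarrow> nat \<Rightarrow> (nat \<Rightarrow> int) set \<Rightarrow> bool" where
  "perfect_code m r C \<longleftrightarrow> C \<subseteq> Zm m \<and>
     (\<forall>x\<in>C. \<forall>x'\<in>C. x \<noteq> x' \<longrightarrow> ball_a m r x \<inter> ball_a m r x' = {}) \<and>
     (\<Union>x\<in>C. ball_a m r x) = Zm m"

end

theory Submission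
  imports Defs
begin

definition nrm :: "nat \<Rightarrow> (nat \<Rightarrow> int) \<Rightarrow> int" where
  "nrm m v = (\<Sum>i<m. \<bar>v i\<bar>) + \<bar>\<Sum>i<m. v i\<bar>"

lemma da_nrm: "2 * d_a m x y = nrm m (\<lambda>i. x i - y i)"
proof -
  have A: "(\<Sum>i\<in>{i. i < m \<and> x i > y i}. x i - y i) = (\<Sum>i<m. if x i > y i then x i - y i else 0)"
  proof -
    have "{i. i < m \<and> x i > y i} = {i\<in>{..<m}. x i > y i}" by auto
    then show ?thesis by (simp only:) (rule sum.inter_filter, simp)
  qed
  have B: "(\<Sum>i\<in>{i. i < m \<and> x i < y i}. y i - x i) = (\<Sum>i<m. if x i < y i then y i - x i else 0)"
  proof -
    have "{i. i < m \<and> x i < y i} = {i\<in>{..<m}. x i < y i}" by auto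
    then show ?thesis by (simp only:) (rule sum.inter_filter, simp)
  qed
  have s1: "(\<Sum>i<m. \<bar>x i - y i\<bar>) = (\<Sum>i<m. if x i > y i then x i - y i else 0) + (\<Sum>i<m. if x i < y i then y i - x i else 0)"
    unfolding sum.distrib[symmetric] by (rule sum.cong) auto
  have s2: "(\<Sum>i<m. x i - y i) = (\<Sum>i<m. if x i > y i then x i - y i else 0) - (\<Sum>i<m. if x i < y i then y i - x i else 0)"
    unfolding sum_subtractf[symmetric] by (rule sum.cong) auto
  show ?thesis unfolding d_a_def nrm_def A B s1 s2 by arith
qed

lemma nrm_neg: "nrm m (\<lambda>i. - v i) = nrm m v"
  unfolding nrm_def by (simp add: sum_negf)

lemma nrm_swap: "nrm m (\<lambda>i. x i - y i) = nrm m (\<lambda>i. y i - x i)"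
  using nrm_neg[of m "\<lambda>i. x i - y i"] by simp

lemma nrm_tri: "nrm m (\<lambda>i. a i + b i) \<le> nrm m a + nrm m b"
proof -
  have "(\<Sum>i<m. \<bar>a i + b i\<bar>) \<le> (\<Sum>i<m. \<bar>a i\<bar> + \<bar>b i\<bar>)"
    by (rule sum_mono) (rule abs_triangle_ineq)
  moreover have "\<bar>\<Sum>i<m. a i + b i\<bar> \<le> \<bar>\<Sum>i<m. a i\<bar> + \<bar>\<Sum>i<m. b i\<bar>"
    by (simp add: sum.distrib abs_triangle_ineq)
  ultimately show ?thesis unfolding nrm_def by (simp add: sum.distrib)
qed

lemma nrm_even: "even (nrm m v)"
proof -
  have "nrm m v = (\<Sum>i<m. \<bar>v i\<bar> - v i) + ((\<Sum>i<m. v i) + \<bar>\<Sum>i<m. v i\<bar>)"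
    unfolding nrm_def by (simp add: sum_subtractf)
  moreover have "even (\<Sum>i<m. \<bar>v i\<bar> - v i)"
    by (rule dvd_sum) (auto simp: abs_if)
  moreover have "even ((\<Sum>i<m. v i) + \<bar>\<Sum>i<m. v i\<bar>)" by (auto simp: abs_if)
  ultimately show ?thesis by simp
qed

lemma nrm_zero: "nrm m (\<lambda>i. 0) = 0" unfolding nrm_def by simp

definition ee :: "nat \<Rightarrow> nat \<Rightarrow> int" where "ee i = (\<lambda>j. if j = i then 1 else 0)"

lemma ee_Zm: "i < m \<Longrightarrow> ee i \<in> Zm m" unfolding ee_def Zm_def by auto

lemma sum_ee: "i < m \<Longrightarrow> (\<Sum>j<m. ee i j) = 1" unfolding ee_def by simp
lemma sum_abs_ee: "i < m \<Longrightarrow> (\<Sum>j<m. \<bar>ee i j\<bar>) = 1" unfolding ee_def by simp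

lemma step_pos:
  assumes "i < m" "v i > 0" "(\<Sum>j<m. v j) > 0"
  shows "nrm m (\<lambda>j. v j - ee i j) = nrm m v - 2"
proof -
  have "(\<Sum>j<m. \<bar>v j - ee i j\<bar>) = (\<Sum>j<m. \<bar>v j\<bar> - ee i j)"
    by (rule sum.cong) (use assms in \<open>auto simp: ee_def\<close>)
  also have "\<dots> = (\<Sum>j<m. \<bar>v j\<bar>) - 1" using assms by (simp add: sum_subtractf sum_ee)
  finally have 1: "(\<Sum>j<m. \<bar>v j - ee i j\<bar>) = (\<Sum>j<m. \<bar>v j\<bar>) - 1" .
  have 2: "(\<Sum>j<m. v j - ee i j) = (\<Sum>j<m. v j) - 1" using assms by (simp add: sum_subtractf sum_ee)
  show ?thesis unfolding nrm_def 1 2 using assms by simp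
qed

lemma step_neg:
  assumes "i < m" "v i < 0" "(\<Sum>j<m. v j) < 0"
  shows "nrm m (\<lambda>j. v j - (- ee i j)) = nrm m v - 2"
proof -
  have "(\<Sum>j<m. \<bar>v j - (- ee i j)\<bar>) = (\<Sum>j<m. \<bar>v j\<bar> - ee i j)"
    by (rule sum.cong) (use assms in \<open>auto simp: ee_def\<close>)
  also have "\<dots> = (\<Sum>j<m. \<bar>v j\<bar>) - 1" using assms by (simp add: sum_subtractf sum_ee)
  finally have 1: "(\<Sum>j<m. \<bar>v j - (- ee i j)\<bar>) = (\<Sum>j<m. \<bar>v j\<bar>) - 1" .
  have 2: "(\<Sum>j<m. v j - (- ee i j)) = (\<Sum>j<m. v j) + 1" using assms by (simp add: sum.distrib sum_ee)
  show ?thesis unfolding nrm_def 1 2 using assms by simp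
qed

lemma step_zero:
  assumes "i < m" "k < m" "v i > 0" "v k < 0" "(\<Sum>j<m. v j) = 0"
  shows "nrm m (\<lambda>j. v j - (ee i j - ee k j)) = nrm m v - 2"
proof -
  have ik: "i \<noteq> k" using assms by auto
  have "(\<Sum>j<m. \<bar>v j - (ee i j - ee k j)\<bar>) = (\<Sum>j<m. \<bar>v j\<bar> - ee i j - ee k j)"
    by (rule sum.cong) (use assms ik in \<open>auto simp: ee_def\<close>)
  also have "\<dots> = (\<Sum>j<m. \<bar>v j\<bar>) - 2" using assms by (simp add: sum_subtractf sum_ee)
  finally have 1: "(\<Sum>j<m. \<bar>v j - (ee i j - ee k j)\<bar>) = (\<Sum>j<m. \<bar>v j\<bar>) - 2" .
  have 2: "(\<Sum>j<m. v j - (ee i j - ee k j)) = 0" using assms by (simp add: sum_subtractf sum_ee)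
  show ?thesis unfolding nrm_def 1 2 using assms by simp
qed

lemma nrm_ee: "i < m \<Longrightarrow> nrm m (ee i) = 2"
  unfolding nrm_def by (simp add: sum_ee sum_abs_ee)
lemma nrm_mee: "i < m \<Longrightarrow> nrm m (\<lambda>j. - ee i j) = 2"
  using nrm_neg[of m "ee i"] nrm_ee by simp
lemma nrm_ee2: "i < m \<Longrightarrow> k < m \<Longrightarrow> i \<noteq> k \<Longrightarrow> nrm m (\<lambda>j. ee i j - ee k j) = 2"
proof -
  assume a: "i < m" "k < m" "i \<noteq> k"
  have "(\<Sum>j<m. \<bar>ee i j - ee k j\<bar>) = (\<Sum>j<m. ee i j + ee k j)"
    by (rule sum.cong) (use a in \<open>auto simp: ee_def\<close>)
  then show ?thesis unfolding nrm_def using a by (simp add: sum.distrib sum_subtractf sum_ee)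
qed

lemma step:
  assumes "nrm m v > 0"
  shows "\<exists>w \<in> Zm m. nrm m w \<le> 2 \<and> nrm m (\<lambda>j. v j - w j) \<le> nrm m v - 2"
proof -
  consider "(\<Sum>j<m. v j) > 0" | "(\<Sum>j<m. v j) < 0" | "(\<Sum>j<m. v j) = 0" by linarith
  then show ?thesis
  proof cases
    case 1
    have "\<exists>i<m. v i > 0"
    proof (rule ccontr)
      assume "\<not> ?thesis"
      then have "\<forall>i\<in>{..<m}. v i \<le> 0" by auto
      then have "sum v {..<m} \<le> 0" by (metis sum_nonpos)
      then show False using 1 by simp
    qed
    then obtain i where i: "i < m" "v i > 0" by auto
    show ?thesis using step_pos[OF i 1] nrm_ee[OF i(1)] ee_Zm[OF i(1)] by force
  next
    case 2
    have "\<exists>i<m. v i < 0"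
    proof (rule ccontr)
      assume "\<not> ?thesis"
      then have "\<forall>i\<in>{..<m}. v i \<ge> 0" by auto
      then have "sum v {..<m} \<ge> 0" by (metis sum_nonneg)
      then show False using 2 by simp
    qed
    then obtain i where i: "i < m" "v i < 0" by auto
    have Z: "(\<lambda>j. - ee i j) \<in> Zm m" using i unfolding Zm_def ee_def by auto
    show ?thesis using step_neg[OF i 2] nrm_mee[OF i(1)] Z by force
  next
    case 3
    have "(\<Sum>j<m. \<bar>v j\<bar>) > 0" using assms 3 unfolding nrm_def by simp
    have "\<exists>i0<m. v i0 \<noteq> 0"
    proof (rule ccontr)
      assume "\<not> ?thesis"
      then have "(\<Sum>j<m. \<bar>v j\<bar>) = 0" by simp
      then show False using \<open>(\<Sum>j<m. \<bar>v j\<bar>) > 0\<close> by simp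
    qed
    then obtain i0 where i0: "i0 < m" "v i0 \<noteq> 0" by auto
    have "\<exists>i<m. v i > 0"
    proof (rule ccontr)
      assume "\<not> ?thesis"
      then have np: "\<forall>i<m. v i \<le> 0" by auto
      then have "v i0 < 0" using i0 by force
      then have "(\<Sum>j<m. v j) < 0"
        using sum_strict_mono_ex1[of "{..<m}" v "\<lambda>_. 0"] np i0 by auto
      then show False using 3 by simp
    qed
    then obtain i where i: "i < m" "v i > 0" by auto
    have "\<exists>k<m. v k < 0"
    proof (rule ccontr)
      assume "\<not> ?thesis"
      then have np: "\<forall>k<m. v k \<ge> 0" by auto
      then have "(\<Sum>j<m. v j) > 0"
        using sum_strict_mono_ex1[of "{..<m}" "\<lambda>_. 0" v] np i by auto
      then show False using 3 by simp
    qed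
    then obtain k where k: "k < m" "v k < 0" by auto
    have ik: "i \<noteq> k" using i k by auto
    have Z: "(\<lambda>j. ee i j - ee k j) \<in> Zm m" using i k unfolding Zm_def ee_def by auto
    show ?thesis using step_zero[OF i(1) k(1) i(2) k(2) 3] nrm_ee2[OF i(1) k(1) ik] Z by force
  qed
qed

lemma Zm_add: "a \<in> Zm m \<Longrightarrow> b \<in> Zm m \<Longrightarrow> (\<lambda>j. a j + b j) \<in> Zm m"
  unfolding Zm_def by auto

lemma nrm_nonneg: "nrm m v \<ge> 0" unfolding nrm_def by (simp add: sum_nonneg)

lemma midpoint:
  "nrm m v \<le> 2 * int s + 2 * int t \<Longrightarrow>
   \<exists>w \<in> Zm m. nrm m w \<le> 2 * int s \<and> nrm m (\<lambda>j. v j - w j) \<le> 2 * int t"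
proof (induction s arbitrary: v)
  case 0
  have "(\<lambda>j. 0::int) \<in> Zm m" unfolding Zm_def by simp
  moreover have "nrm m (\<lambda>j. 0::int) \<le> 2 * int 0" using nrm_zero[of m] by simp
  moreover have "nrm m (\<lambda>j. v j - 0) \<le> 2 * int t" using 0 by simp
  ultimately show ?case by blast
next
  case (Suc s)
  show ?case
  proof (cases "nrm m v \<le> 2 * int s + 2 * int t")
    case True
    from Suc.IH[OF True] obtain w where "w \<in> Zm m" "nrm m w \<le> 2 * int s"
      "nrm m (\<lambda>j. v j - w j) \<le> 2 * int t" by blast
    moreover have "nrm m w \<le> 2 * int (Suc s)" using calculation(2) by simp
    ultimately show ?thesis by blast
  next
    case False
    then have "nrm m v > 0" by linarith
    from step[OF this] obtain w1 where w1: "w1 \<in> Zm m" "nrm m w1 \<le> 2"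
      "nrm m (\<lambda>j. v j - w1 j) \<le> nrm m v - 2" by blast
    have "nrm m (\<lambda>j. v j - w1 j) \<le> 2 * int s + 2 * int t" using w1(3) Suc.prems by simp
    from Suc.IH[OF this] obtain w' where w': "w' \<in> Zm m" "nrm m w' \<le> 2 * int s"
      "nrm m (\<lambda>j. v j - w1 j - w' j) \<le> 2 * int t" by blast
    have "nrm m (\<lambda>j. w1 j + w' j) \<le> 2 * int (Suc s)"
      using nrm_tri[of m w1 w'] w1(2) w'(2) by simp
    moreover have "(\<lambda>j. v j - (w1 j + w' j)) = (\<lambda>j. v j - w1 j - w' j)" by (simp add: algebra_simps)
    ultimately show ?thesis using w'(3) Zm_add[OF w1(1) w'(1)] by auto
  qed
qed

lemma ball_iff: "z \<in> ball_a m r c \<longleftrightarrow> z \<in> Zm m \<and> nrm m (\<lambda>i. z i - c i) \<le> 2 * int r"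
  unfolding ball_a_def using da_nrm[of m z c] by auto

lemma sep:
  assumes pc: "perfect_code m r C" and c: "c \<in> C" "c' \<in> C" "c \<noteq> c'"
  shows "nrm m (\<lambda>i. c i - c' i) \<ge> 4 * int r + 2"
proof (rule ccontr)
  assume "\<not> ?thesis"
  then have "nrm m (\<lambda>i. c i - c' i) < 4 * int r + 2" by simp
  moreover have "even (nrm m (\<lambda>i. c i - c' i))" by (rule nrm_even)
  ultimately have le: "nrm m (\<lambda>i. c i - c' i) \<le> 2 * int r + 2 * int r"
  proof -
    assume a: "nrm m (\<lambda>i. c i - c' i) < 4 * int r + 2" "even (nrm m (\<lambda>i. c i - c' i))"
    then obtain k where k: "nrm m (\<lambda>i. c i - c' i) = 2 * k" by (auto elim: evenE)
    then have "k < 2 * int r + 1" using a(1) by linarith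
    then show ?thesis using k by linarith
  qed
  from midpoint[OF le] obtain w where w: "w \<in> Zm m" "nrm m w \<le> 2 * int r"
    "nrm m (\<lambda>j. (c j - c' j) - w j) \<le> 2 * int r" by blast
  have CZ: "C \<subseteq> Zm m" using pc unfolding perfect_code_def by auto
  define z where "z = (\<lambda>j. c' j + w j)"
  have zZ: "z \<in> Zm m" unfolding z_def using Zm_add[of c' m w] CZ c w by auto
  have "z \<in> ball_a m r c'" unfolding ball_iff z_def using zZ w(2) z_def by simp
  moreover have "z \<in> ball_a m r c"
  proof -
    have "(\<lambda>i. z i - c i) = (\<lambda>j. - ((c j - c' j) - w j))" unfolding z_def by (simp add: algebra_simps)
    then have "nrm m (\<lambda>i. z i - c i) \<le> 2 * int r" using w(3) nrm_neg by metis
    then show ?thesis unfolding ball_iff using zZ by simp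
  qed
  moreover have "ball_a m r c \<inter> ball_a m r c' = {}" using pc c unfolding perfect_code_def by auto
  ultimately show False by blast
qed


lemma keyK:
  assumes x1: "\<forall>i<m. x i \<ge> 1" and xs: "(\<Sum>i<m. x i) = int r + 1"
    and d: "nrm m (\<lambda>i. x i - y i) \<le> 2 * int r" and big: "nrm m y \<ge> 4 * int r + 2"
  shows "(\<forall>i<m. y i \<ge> x i) \<and> (\<Sum>i<m. y i) = 2 * int r + 1"
proof -
  have ax: "(\<Sum>i<m. \<bar>x i\<bar>) = (\<Sum>i<m. x i)" by (rule sum.cong) (use x1 in auto)
  have nx: "nrm m x = 2 * int r + 2" unfolding nrm_def ax xs by simp
  have ge: "\<forall>i<m. y i \<ge> x i"
  proof (rule ccontr)
    assume "\<not> (\<forall>i<m. y i \<ge> x i)"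
    then obtain i where i: "i < m" "y i < x i" by auto
    have "(\<Sum>j<m. \<bar>y j\<bar>) < (\<Sum>j<m. \<bar>x j - y j\<bar> + \<bar>x j\<bar>)"
    proof (rule sum_strict_mono_ex1)
      show "finite {..<m}" by simp
      show "\<forall>j\<in>{..<m}. \<bar>y j\<bar> \<le> \<bar>x j - y j\<bar> + \<bar>x j\<bar>" by auto
      show "\<exists>j\<in>{..<m}. \<bar>y j\<bar> < \<bar>x j - y j\<bar> + \<bar>x j\<bar>"
        using i x1 by (intro bexI[of _ i]) (auto simp: abs_if)
    qed
    moreover have "\<bar>\<Sum>j<m. y j\<bar> \<le> \<bar>\<Sum>j<m. x j - y j\<bar> + \<bar>\<Sum>j<m. x j\<bar>"
      by (simp add: sum_subtractf)
    ultimately have "nrm m y < nrm m (\<lambda>i. x i - y i) + nrm m x"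
      unfolding nrm_def by (simp add: sum.distrib)
    then show False using d big nx by linarith
  qed
  have ay: "(\<Sum>i<m. \<bar>y i\<bar>) = (\<Sum>i<m. y i)" by (rule sum.cong) (use ge x1 in force)+
  have "(\<Sum>i<m. y i) \<ge> 0" by (rule sum_nonneg) (use ge x1 in force)
  then have ny: "nrm m y = 2 * (\<Sum>i<m. y i)" unfolding nrm_def ay by simp
  have "y = (\<lambda>i. x i + (y i - x i))" by simp
  then have "nrm m y \<le> nrm m x + nrm m (\<lambda>i. y i - x i)" using nrm_tri[of m x "\<lambda>i. y i - x i"] by metis
  then have "nrm m y \<le> 4 * int r + 2" using nx d nrm_swap[of m x y] by linarith
  then have "(\<Sum>i<m. y i) = 2 * int r + 1" using big ny by linarith
  then show ?thesis using ge by simp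
qed

lemma diffK:
  assumes "\<forall>i<m. y i \<ge> 1" "\<forall>i<m. y' i \<ge> 1" "(\<Sum>i<m. y i) = 2*int r+1"
    "(\<Sum>i<m. y' i) = 2*int r+1" "m \<ge> 1"
  shows "nrm m (\<lambda>i. y i - y' i) < 4*int r + 2"
proof -
  have "(\<Sum>i<m. \<bar>y i - y' i\<bar>) \<le> (\<Sum>i<m. y i + y' i - 2)"
  proof (rule sum_mono)
    fix i assume "i \<in> {..<m}"
    then have "y i \<ge> 1" "y' i \<ge> 1" using assms by auto
    then show "\<bar>y i - y' i\<bar> \<le> y i + y' i - 2" by linarith
  qed
  also have "\<dots> = 4 * int r + 2 - 2 * int m" using assms by (simp add: sum.distrib sum_subtractf)
  finally have "(\<Sum>i<m. \<bar>y i - y' i\<bar>) \<le> 4 * int r + 2 - 2 * int m" .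
  moreover have "(\<Sum>i<m. y i - y' i) = 0" using assms by (simp add: sum_subtractf)
  ultimately show ?thesis unfolding nrm_def using assms by simp
qed

lemma coverK:
  assumes pc: "perfect_code m r C" and b: "b \<in> C"
    and x1: "\<forall>i<m. x i \<ge> 1" and x0: "\<forall>i\<ge>m. x i = 0" and xs: "(\<Sum>i<m. x i) = int r + 1"
  shows "\<exists>c\<in>C. (\<forall>i<m. c i - b i \<ge> x i) \<and> (\<Sum>i<m. c i - b i) = 2 * int r + 1"
proof -
  have CZ: "C \<subseteq> Zm m" using pc unfolding perfect_code_def by auto
  define p where "p = (\<lambda>j. b j + x j)"
  have pZ: "p \<in> Zm m" unfolding p_def using Zm_add[of b m x] CZ b x0 unfolding Zm_def by auto
  then have "p \<in> (\<Union>c\<in>C. ball_a m r c)" using pc unfolding perfect_code_def by auto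
  then obtain c where c: "c \<in> C" "p \<in> ball_a m r c" by auto
  have ax: "(\<Sum>i<m. \<bar>x i\<bar>) = (\<Sum>i<m. x i)" by (rule sum.cong) (use x1 in auto)
  have nx: "nrm m x = 2 * int r + 2" unfolding nrm_def ax xs by simp
  have "c \<noteq> b"
  proof
    assume "c = b"
    then have "nrm m (\<lambda>i. p i - b i) \<le> 2 * int r" using c(2) unfolding ball_iff by simp
    moreover have "(\<lambda>i. p i - b i) = x" unfolding p_def by simp
    ultimately show False using nx by simp
  qed
  then have big: "nrm m (\<lambda>i. c i - b i) \<ge> 4 * int r + 2" using sep[OF pc c(1) b] by simp
  have "nrm m (\<lambda>i. p i - c i) \<le> 2 * int r" using c(2) unfolding ball_iff by simp
  moreover have "(\<lambda>i. p i - c i) = (\<lambda>i. x i - (c i - b i))" unfolding p_def by (simp add: algebra_simps)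
  ultimately have d: "nrm m (\<lambda>i. x i - (c i - b i)) \<le> 2 * int r" by simp
  from keyK[OF x1 xs d big] c(1) show ?thesis by blast
qed


definition xk :: "nat \<Rightarrow> int \<Rightarrow> nat \<Rightarrow> nat \<Rightarrow> int" where
  "xk m A k = (\<lambda>j. if j < m then (if j = k then A else 1) else 0)"

lemma xk_sum: "k < m \<Longrightarrow> (\<Sum>j<m. xk m A k j) = A + int m - 1"
proof -
  assume k: "k < m"
  have "(\<Sum>j<m. xk m A k j) = (\<Sum>j<m. 1 + (if j = k then A - 1 else 0))"
    by (rule sum.cong) (auto simp: xk_def)
  also have "\<dots> = int m + (A - 1)" using k by (simp add: sum.distrib)
  finally show ?thesis by simp
qed

lemma no_code:
  assumes m3: "m \<ge> 3" and r: "r \<ge> 2 * m" and pc: "perfect_code m r C"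
  shows False
proof -
  have "(\<lambda>j. 0::int) \<in> Zm m" unfolding Zm_def by simp
  then have "(\<lambda>j. 0::int) \<in> (\<Union>c\<in>C. ball_a m r c)" using pc unfolding perfect_code_def by auto
  then obtain b where b: "b \<in> C" by auto
  define A where "A = int r + 2 - int m"
  have A1: "A \<ge> 1" unfolding A_def using r by linarith
  have cov: "\<exists>c\<in>C. (\<forall>i<m. c i - b i \<ge> xk m A k i) \<and> (\<Sum>i<m. c i - b i) = 2 * int r + 1"
    if k: "k < m" for k
  proof (rule coverK[OF pc b])
    show "\<forall>i<m. 1 \<le> xk m A k i" using A1 by (auto simp: xk_def)
    show "\<forall>i\<ge>m. xk m A k i = 0" by (auto simp: xk_def)
    show "(\<Sum>i<m. xk m A k i) = int r + 1" using xk_sum[OF k] unfolding A_def by simp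
  qed
  obtain c0 where c0: "c0 \<in> C" "\<forall>i<m. c0 i - b i \<ge> xk m A 0 i" "(\<Sum>i<m. c0 i - b i) = 2 * int r + 1"
    using cov[of 0] m3 by auto
  obtain c1 where c1: "c1 \<in> C" "\<forall>i<m. c1 i - b i \<ge> xk m A 1 i" "(\<Sum>i<m. c1 i - b i) = 2 * int r + 1"
    using cov[of 1] m3 by auto
  obtain c2 where c2: "c2 \<in> C" "\<forall>i<m. c2 i - b i \<ge> xk m A 2 i" "(\<Sum>i<m. c2 i - b i) = 2 * int r + 1"
    using cov[of 2] m3 by auto
  have pos: "\<forall>i<m. c i - b i \<ge> 1" if "\<forall>i<m. c i - b i \<ge> xk m A k i" for c k
  proof (intro allI impI)
    fix i assume "i < m"
    then have "c i - b i \<ge> xk m A k i" "xk m A k i \<ge> 1" using that A1 by (auto simp: xk_def)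
    then show "c i - b i \<ge> 1" by linarith
  qed
  have distinct: False if "c \<in> C" "c' \<in> C" "c \<noteq> c'"
      "\<forall>i<m. c i - b i \<ge> 1" "\<forall>i<m. c' i - b i \<ge> 1"
      "(\<Sum>i<m. c i - b i) = 2 * int r + 1" "(\<Sum>i<m. c' i - b i) = 2 * int r + 1" for c c'
  proof -
    have "nrm m (\<lambda>i. (c i - b i) - (c' i - b i)) < 4 * int r + 2"
      by (rule diffK[of m "\<lambda>i. c i - b i" "\<lambda>i. c' i - b i" r]) (use that m3 in auto)
    moreover have "nrm m (\<lambda>i. c i - c' i) \<ge> 4 * int r + 2" by (rule sep[OF pc that(1-3)])
    ultimately show False by simp
  qed
  show False
  proof (cases "c0 = c1 \<and> c1 = c2")
    case True
    let ?y = "\<lambda>i. c0 i - b i"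
    have y0: "?y 0 \<ge> A"
    proof -
      have "xk m A 0 0 \<le> c0 0 - b 0" using c0(2) m3 by auto
      moreover have "xk m A 0 0 = A" using m3 by (simp add: xk_def)
      ultimately show ?thesis using True by auto
    qed
    have y1: "?y 1 \<ge> A"
    proof -
      have "xk m A 1 1 \<le> c1 1 - b 1" using c1(2) m3 by auto
      moreover have "xk m A 1 1 = A" using m3 by (simp add: xk_def)
      ultimately show ?thesis using True by auto
    qed
    have y2: "?y 2 \<ge> A"
    proof -
      have "xk m A 2 2 \<le> c2 2 - b 2" using c2(2) m3 by auto
      moreover have "xk m A 2 2 = A" using m3 by (simp add: xk_def)
      ultimately show ?thesis using True by auto
    qed
    have yr: "(\<Sum>i\<in>{3..<m}. ?y i) \<ge> (\<Sum>i\<in>{3..<m}. 1)"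
      by (rule sum_mono) (use pos[OF c0(2)] in auto)
    have "(\<Sum>i<m. ?y i) = (\<Sum>i\<in>{0..<3}. ?y i) + (\<Sum>i\<in>{3..<m}. ?y i)"
      using m3 by (simp add: atLeast0LessThan[symmetric] sum.atLeastLessThan_concat)
    also have "(\<Sum>i\<in>{0..<3}. ?y i) = ?y 0 + ?y 1 + ?y 2" by (simp add: numeral_3_eq_3 numeral_2_eq_2)
    finally have "(\<Sum>i<m. ?y i) \<ge> 3 * A + int (m - 3)" using y0 y1 y2 yr by simp
    moreover have "int (m - 3) = int m - 3" using m3 by simp
    moreover have "int r \<ge> 2 * int m" using r by linarith
    moreover have "3 * A = 3 * int r + 6 - 3 * int m" unfolding A_def by simp
    ultimately show False using c0(3) by linarith
  next
    case False
    then show False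
      using distinct[OF c0(1) c1(1) _ pos[OF c0(2)] pos[OF c1(2)] c0(3) c1(3)]
        distinct[OF c1(1) c2(1) _ pos[OF c1(2)] pos[OF c2(2)] c1(3) c2(3)] by blast
  qed
qed

theorem mainTheorem11:
  shows "\<forall>m::nat. m \<ge> 3 \<longrightarrow> (\<exists>r0::nat. \<forall>r\<ge>r0. \<not> (\<exists>C. perfect_code m r C))"
proof (intro allI impI)
  fix m :: nat assume m3: "m \<ge> 3"
  show "\<exists>r0::nat. \<forall>r\<ge>r0. \<not> (\<exists>C. perfect_code m r C)"
    using no_code[OF m3] by blast
qed

end
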